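(* For every integer $k\ge 2$, the user partition multicast rate of the $(k,2)$-GIC problem (defined in the context) satisfies $\beta_{UPM}\le k$.
   Context: GIC problem: there are $m$ packets $x_1,\dots,x_m$; for each $i\in[m]$ there is a nonempty set $U_i=\{u_i^1,\dots,u_i^{|U_i|}\}$ of users demanding $x_i$, $U=\bigcup_i U_i$; user $u_i^j$ knows the packets $x_{i'}$, $i'\in A_i^j$, where $A_i^j\subseteq[m]\setminus\{i\}$. UPM rate: for a partition of $U$ into nonempty disjoint sets $W_1,\dots,W_h$ ($1\le h\le m$), let $Y_e=\{i: u_i^j\in W_e\text{ for some } j\}$ and $c_e=\min\{|A_i^j\cap Y_e|: u_i^j\in W_e\}$; $\beta_{UPM}$ is the minimum over all such partitions of $\sum_{e=1}^h(|Y_e|-c_e)$. The $(k,2)$-GIC problem: $m=k(k-1)/2$ packets, each packet $x_i$ demanded by exactly two users $U_i=\{u_i^1,u_i^2\}$. For $l\in[k]$ define $I_l^1=\{(l-1)k+a-\tfrac{l(l-1)}{2} : a=1,\dots,k-l\}$ for $l\ne k$, $I_k^1=\emptyset$; $I_l^2=\{(a-1)k+l-\tfrac{a(a+1)}{2} : a=1,\dots,l-1\}$ for $l\ne1$, $I_1^2=\emptyset$; $I_l=I_l^1\cup I_l^2$. The side information of user $u_i^j$ ($j\in\{1,2\}$) is $A_i^j=I_l\setminus\{i\}$ where $l$ is the index with $i\in I_l^j$. *)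

theory Defs
  imports Main
begin

(* General GIC problem: packets 1..m; a user is a pair (i,j) meaning u_i^j, which
   demands packet i; the set of all users is U; A i j is the side information of u_i^j. *)

definition is_user_partition :: "(nat \<times> nat) set \<Rightarrow> nat \<Rightarrow> (nat \<times> nat) set set \<Rightarrow> bool" where
  "is_user_partition U m P \<longleftrightarrow>
     finite P \<and> (\<forall>W\<in>P. W \<noteq> {}) \<and> \<Union>P = U \<and>
     (\<forall>W1\<in>P. \<forall>W2\<in>P. W1 \<noteq> W2 \<longrightarrow> W1 \<inter> W2 = {}) \<and>
     1 \<le> card P \<and> card P \<le> m"

definition block_packets :: "(nat \<times> nat) set \<Rightarrow> nat set" where
  "block_packets W = fst ` W"

definition block_c :: "(nat \<Rightarrow> nat \<Rightarrow> nat set) \<Rightarrow> (nat \<times> nat) set \<Rightarrow> nat" where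
  "block_c A W = Min ((\<lambda>(i,j). card (A i j \<inter> block_packets W)) ` W)"

definition upm_cost :: "(nat \<Rightarrow> nat \<Rightarrow> nat set) \<Rightarrow> (nat \<times> nat) set set \<Rightarrow> nat" where
  "upm_cost A P = (\<Sum>W\<in>P. card (block_packets W) - block_c A W)"

definition beta_UPM :: "(nat \<times> nat) set \<Rightarrow> nat \<Rightarrow> (nat \<Rightarrow> nat \<Rightarrow> nat set) \<Rightarrow> nat" where
  "beta_UPM U m A = Min (upm_cost A ` {P. is_user_partition U m P})"

definition k2_m :: "nat \<Rightarrow> nat" where
  "k2_m k = k * (k - 1) div 2"

definition k2_users :: "nat \<Rightarrow> (nat \<times> nat) set" where
  "k2_users k = {(i, j). i \<in> {1..k2_m k} \<and> j \<in> {1, 2}}"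

definition I1 :: "nat \<Rightarrow> nat \<Rightarrow> nat set" where
  "I1 k l = (if l = k then {} else
      {(l - 1) * k + a - l * (l - 1) div 2 | a. 1 \<le> a \<and> a \<le> k - l})"

definition I2 :: "nat \<Rightarrow> nat \<Rightarrow> nat set" where
  "I2 k l = (if l = 1 then {} else
      {(a - 1) * k + l - a * (a + 1) div 2 | a. 1 \<le> a \<and> a \<le> l - 1})"

definition Iset :: "nat \<Rightarrow> nat \<Rightarrow> nat set" where
  "Iset k l = I1 k l \<union> I2 k l"

definition Ij :: "nat \<Rightarrow> nat \<Rightarrow> nat \<Rightarrow> nat set" where
  "Ij k j l = (if j = 1 then I1 k l else I2 k l)"

definition k2_side :: "nat \<Rightarrow> nat \<Rightarrow> nat \<Rightarrow> nat set" where
  "k2_side k i j = Iset k (THE l. l \<in> {1..k} \<and> i \<in> Ij k j l) - {i}"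

end

theory Submission
  imports Defs
begin

definition tt :: "nat \<Rightarrow> nat \<Rightarrow> nat" where
  "tt k l = (l - 1) * k - l * (l - 1) div 2"

lemma half_le: "l \<le> k \<Longrightarrow> l * (l - 1) div 2 \<le> (l - 1) * (k::nat)"
proof -
  assume "l \<le> k"
  have "l * (l - 1) div 2 \<le> l * (l - 1)" by simp
  also have "\<dots> \<le> k * (l - 1)" using \<open>l \<le> k\<close> by simp
  finally show ?thesis by (simp add: mult.commute)
qed

lemma half_suc: "Suc l * l div 2 = l * (l - 1) div 2 + (l::nat)"
proof (cases l)
  case 0 then show ?thesis by simp
next
  case (Suc n)
  have "Suc l * l = l * (l - 1) + 2 * l" using Suc by (simp add: algebra_simps)
  then show ?thesis by simp
qed

lemma tt_1: "tt k 1 = 0" by (simp add: tt_def)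

lemma tt_Suc: "1 \<le> l \<Longrightarrow> l < k \<Longrightarrow> tt k (Suc l) = tt k l + (k - l)"
proof -
  assume a: "l < k" and l1: "1 \<le> l"
  have h1: "l * (l - 1) div 2 \<le> (l - 1) * k" using half_le[of l k] a by simp
  have h2: "(l - 1) * k + k = l * k" if "l \<ge> 1" using that by (cases l) auto
  show ?thesis
  proof (cases "l = 0")
    case True then show ?thesis using l1 by simp
  next
    case False
    have "tt k (Suc l) = l * k - (l * (l - 1) div 2 + l)"
      unfolding tt_def using half_suc[of l] by (simp del: mult_Suc add: mult_Suc[symmetric])
    also have "\<dots> = tt k l + (k - l)" unfolding tt_def using h1 h2 False a
      by (metis (no_types, lifting) Nat.add_diff_assoc2 add_diff_assoc diff_diff_left
          less_imp_le_nat less_one not_less)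
    finally show ?thesis .
  qed
qed

lemma tt_k: "tt k k = k2_m k"
proof -
  have "k * (k - 1) div 2 \<le> (k - 1) * k" using half_le[of k k] by simp
  have "(k - 1) * k - k * (k - 1) div 2 = k * (k - 1) div 2"
  proof -
    have ev: "even (k * (k - 1))" by (cases "even k") auto
    have e: "k * (k - 1) = (k * (k - 1) div 2) * 2" using ev by simp
    show ?thesis by (metis e mult.commute add_diff_cancel_left' mult_2_right)
  qed
  then show ?thesis by (simp add: tt_def k2_m_def)
qed


lemma tt_mono: "1 \<le> l \<Longrightarrow> l < l' \<Longrightarrow> l' \<le> k \<Longrightarrow> tt k l + (k - l) \<le> tt k l'"
proof (induction l' rule: nat_induct)
  case 0 then show ?case by simp
next
  case (Suc n)
  show ?case
  proof (cases "l = n")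
    case True then show ?thesis using Suc tt_Suc[of l k] by simp
  next
    case False
    then have "l < n" using Suc by simp
    then have "tt k l + (k - l) \<le> tt k n" using Suc by simp
    also have "\<dots> \<le> tt k (Suc n)" using tt_Suc[of n k] Suc \<open>l < n\<close> by simp
    finally show ?thesis .
  qed
qed

lemma I1_char: "1 \<le> l \<Longrightarrow> l \<le> k \<Longrightarrow> I1 k l = {tt k l + 1 .. tt k l + (k - l)}"
proof -
  assume l1: "1 \<le> l" and lk: "l \<le> k"
  have h: "l * (l - 1) div 2 \<le> (l - 1) * k" using half_le[OF lk] .
  have e: "(l - Suc 0) * k + a - l * (l - Suc 0) div 2 = tt k l + a" for a
    unfolding tt_def using h by simp
  show ?thesis
  proof (cases "l = k")
    case True then show ?thesis by (simp add: I1_def)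
  next
    case False
    have "I1 k l = {tt k l + a | a. 1 \<le> a \<and> a \<le> k - l}"
      using False by (simp add: I1_def e)
    also have "\<dots> = {tt k l + 1 .. tt k l + (k - l)}"
    proof (rule set_eqI, rule iffI)
      fix x assume "x \<in> {tt k l + 1 .. tt k l + (k - l)}"
      then show "x \<in> {tt k l + a | a. 1 \<le> a \<and> a \<le> k - l}"
        by (intro CollectI exI[of _ "x - tt k l"]) auto
    qed auto
    finally show ?thesis .
  qed
qed

lemma I2_char: "b \<le> k \<Longrightarrow> I2 k b = {tt k a + (b - a) | a. 1 \<le> a \<and> a < b}"
proof -
  assume bk: "b \<le> k"
  have e: "(a - 1) * k + b - a * (a + 1) div 2 = tt k a + (b - a)" if "1 \<le> a" "a < b" for a
  proof -
    have h: "a * (a - 1) div 2 \<le> (a - 1) * k" using half_le[of a k] that bk by simp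
    have h2: "a * (a + 1) div 2 = a * (a - 1) div 2 + a" using half_suc[of a]
      by (simp add: mult.commute)
    show ?thesis unfolding tt_def h2 using h that by simp
  qed
  show ?thesis
  proof (cases "b = 1")
    case True then show ?thesis by (auto simp: I2_def)
  next
    case False
    have "I2 k b = {(a - 1) * k + b - a * (a + 1) div 2 | a. 1 \<le> a \<and> a \<le> b - 1}"
      using False by (simp add: I2_def)
    also have "\<dots> = {tt k a + (b - a) | a. 1 \<le> a \<and> a < b}"
    proof (rule set_eqI, rule iffI)
      fix x assume "x \<in> {(a - 1) * k + b - a * (a + 1) div 2 | a. 1 \<le> a \<and> a \<le> b - 1}"
      then obtain a where "1 \<le> a" "a \<le> b - 1" "x = (a - 1) * k + b - a * (a + 1) div 2" by blast
      then have "x = tt k a + (b - a)" using e[of a] by simp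
      moreover have "a < b" using \<open>1 \<le> a\<close> \<open>a \<le> b - 1\<close> by simp
      ultimately show "x \<in> {tt k a + (b - a) | a. 1 \<le> a \<and> a < b}" using \<open>1 \<le> a\<close> by blast
    next
      fix x assume "x \<in> {tt k a + (b - a) | a. 1 \<le> a \<and> a < b}"
      then obtain a where "1 \<le> a" "a < b" "x = tt k a + (b - a)" by blast
      then show "x \<in> {(a - 1) * k + b - a * (a + 1) div 2 | a. 1 \<le> a \<and> a \<le> b - 1}"
        using e[of a] by force
    qed
    finally show ?thesis .
  qed
qed

lemma uniq1: "l \<in> {1..k} \<Longrightarrow> l' \<in> {1..k} \<Longrightarrow> i \<in> I1 k l \<Longrightarrow> i \<in> I1 k l' \<Longrightarrow> l = l'"
proof (rule ccontr)
  assume a: "l \<in> {1..k}" "l' \<in> {1..k}" "i \<in> I1 k l" "i \<in> I1 k l'" "l \<noteq> l'"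
  have *: False if "l1 \<in> {1..k}" "l2 \<in> {1..k}" "i \<in> I1 k l1" "i \<in> I1 k l2" "l1 < l2" for l1 l2
    using that tt_mono[of l1 l2 k] I1_char[of l1 k] I1_char[of l2 k] by auto
  show False using a *[of l l'] *[of l' l] by (cases "l < l'") auto
qed

lemma ex1_aux: "n \<le> k \<Longrightarrow> 1 \<le> n \<Longrightarrow> 0 < i \<Longrightarrow> i \<le> tt k n \<Longrightarrow> \<exists>l\<in>{1..k}. i \<in> I1 k l"
proof (induction n rule: nat_induct)
  case 0 then show ?case by simp
next
  case (Suc n)
  show ?case
  proof (cases "n = 0")
    case True then show ?thesis using Suc tt_1[of k] by simp
  next
    case False
    show ?thesis
    proof (cases "i \<le> tt k n")
      case True then show ?thesis using Suc False by simp
    next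
      case c: False
      have "i \<in> I1 k n" using I1_char[of n k] Suc False c tt_Suc[of n k] by simp
      then show ?thesis using Suc False by auto
    qed
  qed
qed

lemma ex1: "i \<in> {1..k2_m k} \<Longrightarrow> \<exists>l\<in>{1..k}. i \<in> I1 k l"
proof -
  assume a: "i \<in> {1..k2_m k}"
  then have "k \<noteq> 0" by (cases "k = 0") (auto simp: k2_m_def)
  then show ?thesis using ex1_aux[of k k i] a tt_k[of k] by simp
qed

lemma uniq2: "b \<in> {1..k} \<Longrightarrow> b' \<in> {1..k} \<Longrightarrow> i \<in> I2 k b \<Longrightarrow> i \<in> I2 k b' \<Longrightarrow> b = b'"
proof -
  assume a: "b \<in> {1..k}" "b' \<in> {1..k}" "i \<in> I2 k b" "i \<in> I2 k b'"
  obtain x where x: "1 \<le> x" "x < b" "i = tt k x + (b - x)" using a I2_char[of b k] by auto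
  obtain y where y: "1 \<le> y" "y < b'" "i = tt k y + (b' - y)" using a I2_char[of b' k] by auto
  have "i \<in> I1 k x" using x a I1_char[of x k] by auto
  moreover have "i \<in> I1 k y" using y a I1_char[of y k] by auto
  ultimately have "x = y" using uniq1[of x k y i] x y a by auto
  then show "b = b'" using x y by simp
qed

lemma ex2: "i \<in> {1..k2_m k} \<Longrightarrow> \<exists>b\<in>{1..k}. i \<in> I2 k b"
proof -
  assume a: "i \<in> {1..k2_m k}"
  obtain l where l: "l \<in> {1..k}" "i \<in> I1 k l" using ex1[OF a] by blast
  have "i \<in> {tt k l + 1 .. tt k l + (k - l)}" using I1_char[of l k] l by simp
  then obtain c where c: "1 \<le> c" "c \<le> k - l" "i = tt k l + c"
    by (intro that[of "i - tt k l"]) auto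
  have "i = tt k l + (l + c - l)" "l < l + c" "1 \<le> l" using c l by auto
  then have "i \<in> {tt k a + (l + c - a) | a. 1 \<le> a \<and> a < l + c}" by blast
  then have "i \<in> I2 k (l + c)" using I2_char[of "l + c" k] c l by auto
  then show ?thesis using c l by (intro bexI[of _ "l + c"]) auto
qed


definition LL :: "nat \<Rightarrow> nat \<times> nat \<Rightarrow> nat" where
  "LL k u = (THE l. l \<in> {1..k} \<and> fst u \<in> Ij k (snd u) l)"

lemma users_iff: "(i, j) \<in> k2_users k \<longleftrightarrow> i \<in> {1..k2_m k} \<and> (j = 1 \<or> j = 2)"
  by (auto simp: k2_users_def)

lemma LL_prop:
  assumes "(i, j) \<in> k2_users k"
  shows "LL k (i, j) \<in> {1..k} \<and> i \<in> Ij k j (LL k (i, j))"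
proof -
  have i: "i \<in> {1..k2_m k}" and j: "j = 1 \<or> j = 2" using assms users_iff by auto
  have "\<exists>!l. l \<in> {1..k} \<and> i \<in> Ij k j l"
  proof (cases "j = 1")
    case True
    then show ?thesis using ex1[OF i] uniq1[of _ k _ i] by (auto simp: Ij_def)
  next
    case False
    then show ?thesis using ex2[OF i] uniq2[of _ k _ i] by (auto simp: Ij_def)
  qed
  then have "(THE l. l \<in> {1..k} \<and> i \<in> Ij k j l) \<in> {1..k} \<and>
      i \<in> Ij k j (THE l. l \<in> {1..k} \<and> i \<in> Ij k j l)" by (rule theI')
  then show ?thesis by (simp add: LL_def)
qed

lemma side_eq: "k2_side k i j = Iset k (LL k (i, j)) - {i}"
  by (simp add: k2_side_def LL_def)

lemma in_Iset: "(i, j) \<in> k2_users k \<Longrightarrow> i \<in> Iset k (LL k (i, j))"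
  using LL_prop[of i j k] by (auto simp: Iset_def Ij_def split: if_splits)

lemma finite_users: "finite (k2_users k)"
proof -
  have "k2_users k \<subseteq> {1..k2_m k} \<times> {1, 2}" by (auto simp: k2_users_def)
  then show ?thesis by (rule finite_subset) simp
qed

lemma block_cost:
  assumes fin: "finite W" and ne: "W \<noteq> {}"
    and sub: "fst ` W \<subseteq> S"
    and side: "\<And>i j. (i, j) \<in> W \<Longrightarrow> A i j = S - {i}"
  shows "card (block_packets W) - block_c A W \<le> 1"
proof -
  let ?Y = "block_packets W"
  have finY: "finite ?Y" using fin by (simp add: block_packets_def)
  have YS: "?Y \<subseteq> S" using sub by (simp add: block_packets_def)
  have each: "card (A i j \<inter> ?Y) = card ?Y - 1" if "(i, j) \<in> W" for i j
  proof -
    have iY: "i \<in> ?Y" unfolding block_packets_def using that by (metis fst_conv image_eqI)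
    have "A i j \<inter> ?Y = ?Y - {i}" using side[OF that] YS by blast
    then show ?thesis using iY finY by simp
  qed
  have img: "(\<lambda>(i, j). card (A i j \<inter> ?Y)) ` W = {card ?Y - 1}"
  proof
    show "(\<lambda>(i, j). card (A i j \<inter> ?Y)) ` W \<subseteq> {card ?Y - 1}"
    proof
      fix x assume "x \<in> (\<lambda>(i, j). card (A i j \<inter> ?Y)) ` W"
      then obtain i j where "(i, j) \<in> W" "x = card (A i j \<inter> ?Y)" by auto
      then show "x \<in> {card ?Y - 1}" using each by simp
    qed
  next
    obtain u where u: "u \<in> W" using ne by blast
    obtain i j where ij: "u = (i, j)" by (cases u)
    have "card (A i j \<inter> ?Y) \<in> (\<lambda>(i, j). card (A i j \<inter> ?Y)) ` W"
      using u ij by force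
    then show "{card ?Y - 1} \<subseteq> (\<lambda>(i, j). card (A i j \<inter> ?Y)) ` W"
      using each u ij by simp
  qed
  have "block_c A W = card ?Y - 1" unfolding block_c_def img by simp
  then show ?thesis by simp
qed

lemma beta_le:
  assumes "is_user_partition (k2_users k) (k2_m k) P"
  shows "beta_UPM (k2_users k) (k2_m k) (k2_side k) \<le> upm_cost (k2_side k) P"
proof -
  have "{P. is_user_partition (k2_users k) (k2_m k) P} \<subseteq> Pow (Pow (k2_users k))"
    by (auto simp: is_user_partition_def)
  then have "finite {P. is_user_partition (k2_users k) (k2_m k) P}"
    using finite_users by (meson finite_Pow_iff finite_subset)
  then show ?thesis unfolding beta_UPM_def using assms by (intro Min_le) auto
qed

theorem proposition3:
  fixes k :: nat
  assumes "k \<ge> 2"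
  shows "beta_UPM (k2_users k) (k2_m k) (k2_side k) \<le> k"
proof (cases "k = 2")
  case True
  let ?U = "k2_users k"
  have m1: "k2_m k = 1" using True by (simp add: k2_m_def)
  have "(1, 1) \<in> ?U" using m1 by (simp add: users_iff)
  then have ne: "?U \<noteq> {}" by blast
  have part: "is_user_partition ?U (k2_m k) {?U}"
    using ne m1 by (simp add: is_user_partition_def)
  have "fst ` ?U \<subseteq> {1..k2_m k}" by (auto simp: users_iff)
  then have "card (block_packets ?U) \<le> 1" unfolding block_packets_def using m1
    using card_mono[OF finite_atLeastAtMost, of "fst ` ?U" 1 "k2_m k"] by simp
  then have "upm_cost (k2_side k) {?U} \<le> k" using True by (simp add: upm_cost_def)
  then show ?thesis using beta_le[OF part] by linarith
next
  case False
  then have k3: "k \<ge> 3" using assms by simp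
  let ?U = "k2_users k"
  define B where "B l = {u \<in> ?U. LL k u = l}" for l
  define P where "P = B ` {1..k} - {{}}"
  have "k * 2 \<le> k * (k - 1)" using k3 by simp
  then have km: "k \<le> k2_m k" unfolding k2_m_def by linarith
  have "(1, 1) \<in> ?U" using km k3 by (simp add: users_iff)
  then have ne: "?U \<noteq> {}" by blast
  have finP: "finite P" by (simp add: P_def)
  have cardP: "card P \<le> k"
  proof -
    have "card P \<le> card (B ` {1..k})" unfolding P_def by (intro card_mono) auto
    also have "\<dots> \<le> card {1..k}" by (rule card_image_le) simp
    finally show ?thesis by simp
  qed
  have union: "\<Union>P = ?U"
  proof
    show "\<Union>P \<subseteq> ?U" by (auto simp: P_def B_def)
  next
    show "?U \<subseteq> \<Union>P"
    proof
      fix u assume u: "u \<in> ?U"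
      obtain i j where ij: "u = (i, j)" by (cases u)
      have "LL k u \<in> {1..k}" using LL_prop[of i j k] u ij by simp
      moreover have "u \<in> B (LL k u)" using u by (simp add: B_def)
      ultimately show "u \<in> \<Union>P" unfolding P_def by blast
    qed
  qed
  have part: "is_user_partition ?U (k2_m k) P"
    unfolding is_user_partition_def
  proof (intro conjI)
    show "finite P" by (rule finP)
    show "\<forall>W\<in>P. W \<noteq> {}" by (simp add: P_def)
    show "\<Union>P = ?U" by (rule union)
    show "\<forall>W1\<in>P. \<forall>W2\<in>P. W1 \<noteq> W2 \<longrightarrow> W1 \<inter> W2 = {}"
    proof (intro ballI impI)
      fix W1 W2 assume "W1 \<in> P" "W2 \<in> P" "W1 \<noteq> W2"
      then obtain l1 l2 where "W1 = B l1" "W2 = B l2" by (auto simp: P_def)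
      then show "W1 \<inter> W2 = {}" using \<open>W1 \<noteq> W2\<close> by (auto simp: B_def)
    qed
    have "P \<noteq> {}" using union ne by auto
    then show "1 \<le> card P" using finP by (simp add: Suc_le_eq card_gt_0_iff)
    show "card P \<le> k2_m k" using cardP km by simp
  qed
  have "upm_cost (k2_side k) P \<le> (\<Sum>W\<in>P. 1)"
    unfolding upm_cost_def
  proof (rule sum_mono)
    fix W assume W: "W \<in> P"
    then obtain l where l: "W = B l" "W \<noteq> {}" by (auto simp: P_def)
    show "card (block_packets W) - block_c (k2_side k) W \<le> 1"
    proof (rule block_cost[where S = "Iset k l"])
      show "finite W" using l finite_users by (simp add: B_def)
      show "W \<noteq> {}" by (rule l(2))
      show "fst ` W \<subseteq> Iset k l" using l in_Iset by (force simp: B_def)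
      show "k2_side k i j = Iset k l - {i}" if "(i, j) \<in> W" for i j
        using that l by (simp add: B_def side_eq)
    qed
  qed
  also have "\<dots> = card P" by simp
  finally have "upm_cost (k2_side k) P \<le> k" using cardP by linarith
  then show ?thesis using beta_le[OF part] by linarith
qed

end
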